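(* Let $f(\mathbf{x})=\mathbf{x}^{T}A\mathbf{x}+b^{T}\mathbf{x}+1$ be a polynomial of degree $2$ ($A\in\mathbb{R}^{n\times n}$ symmetric, $A\neq0$, $b\in\mathbb{R}^n$) which admits a monic determinantal representation $f(\mathbf{x})=\det(I_k+L(\mathbf{x}))$, $L(\mathbf{x})=x_1A_1+\dots+x_nA_n$, with Hermitian (or real symmetric) $k\times k$ matrices $A_j$. Then the spectrahedron $S=\{\mathbf{x}\in\mathbb{R}^n: I_k+L(\mathbf{x})\succeq 0\}$ does not contain a full dimensional cone if and only if $A$ is negative semidefinite.
   Context: For $f(\mathbf{x})=\det(I+L(\mathbf{x}))$ of degree $d$, the spectrahedron $S=\{\mathbf{x}: I+L(\mathbf{x})\succeq 0\}$ is said to contain a full dimensional cone if there exists $\mathbf{x}\in\mathbb{R}^n$ such that $L(\mathbf{x})\succeq 0$ and $\operatorname{rank}L(\mathbf{x})=d$. *)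

theory Defs
  imports "HOL-Analysis.Analysis"
begin

text \<open>Hermitian complex k x k matrix (real symmetric matrices are the special case
  with real entries).\<close>
definition hermitian_mat :: "complex^'k^'k \<Rightarrow> bool" where
  "hermitian_mat M \<longleftrightarrow> (\<forall>i j. M $ i $ j = cnj (M $ j $ i))"

definition psd_herm :: "complex^'k^'k \<Rightarrow> bool" where
  "psd_herm M \<longleftrightarrow> hermitian_mat M \<and>
     (\<forall>v::complex^'k. 0 \<le> Re (\<Sum>i\<in>UNIV. cnj (v $ i) * (M *v v) $ i))"

definition neg_semidef :: "real^'n^'n \<Rightarrow> bool" where
  "neg_semidef A \<longleftrightarrow> (\<forall>v::real^'n. v \<bullet> (A *v v) \<le> 0)"

definition pencil :: "('n::finite \<Rightarrow> complex^'k::finite^'k) \<Rightarrow> real^'n \<Rightarrow> complex^'k^'k" where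
  "pencil As x = (\<chi> i j. \<Sum>l\<in>UNIV. complex_of_real (x $ l) * (As l $ i $ j))"

definition spectrahedron :: "('n::finite \<Rightarrow> complex^'k::finite^'k) \<Rightarrow> (real^'n) set" where
  "spectrahedron As = {x. psd_herm (mat 1 + pencil As x)}"

text \<open>S contains a full dimensional cone (w.r.t. degree d of f = det(I + L(x))):
  there is x with L(x) \<succeq> 0 and rank L(x) = d.\<close>
definition contains_full_dim_cone :: "('n::finite \<Rightarrow> complex^'k::finite^'k) \<Rightarrow> nat \<Rightarrow> bool" where
  "contains_full_dim_cone As d \<longleftrightarrow>
     (\<exists>x. psd_herm (pencil As x) \<and> rank (pencil As x) = d)"

end

theory Submission imports Defs "HOL-Computational_Algebra.Polynomial" begin


definition cinner :: "complex^'k \<Rightarrow> complex^'k \<Rightarrow> complex" where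
  "cinner u v = (\<Sum>i\<in>UNIV. cnj (u$i) * v$i)"

lemma cinner_cnj: "cnj (cinner u v) = cinner v u"
  by (simp add: cinner_def mult.commute)

lemma cinner_add_right: "cinner u (v + w) = cinner u v + cinner u w"
  by (simp add: cinner_def distrib_left sum.distrib)
lemma cinner_add_left: "cinner (v + w) u = cinner v u + cinner w u"
  by (simp add: cinner_def distrib_right sum.distrib)
lemma cinner_diff_right: "cinner u (v - w) = cinner u v - cinner u w"
  by (simp add: cinner_def right_diff_distrib sum_subtractf)
lemma comp_scaleR: "(r *\<^sub>R v)$i = complex_of_real r * v$i"
  by (metis vector_scaleR_component scaleR_conv_of_real)
lemma cinner_scaleR_right: "cinner u (r *\<^sub>R v) = of_real r * cinner u v"
  unfolding cinner_def comp_scaleR by (simp add: sum_distrib_left algebra_simps)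
lemma cinner_scaleR_left: "cinner (r *\<^sub>R v) u = of_real r * cinner v u"
  unfolding cinner_def comp_scaleR by (simp add: sum_distrib_left algebra_simps)

lemma cinner_self: "cinner u u = of_real ((norm u)^2)"
proof -
  have "(norm u)^2 = (\<Sum>i\<in>UNIV. (norm (u$i))^2)"
    unfolding norm_vec_def L2_set_def by (simp add: sum_nonneg)
  then have "of_real ((norm u)^2) = (\<Sum>i\<in>UNIV. complex_of_real ((norm (u$i))^2))"
    by simp
  also have "\<dots> = (\<Sum>i\<in>UNIV. cnj (u$i) * u$i)"
    by (simp only: complex_norm_square mult.commute)
  finally show ?thesis unfolding cinner_def by simp
qed

lemma re_cinner_self: "Re (cinner u u) = (norm u)^2"
  by (simp add: cinner_self)

lemma herm_cinner:
  assumes "hermitian_mat M"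
  shows "cinner u (M *v v) = cinner (M *v u) v"
proof -
  have "cinner u (M *v v) = (\<Sum>i\<in>UNIV. \<Sum>j\<in>UNIV. cnj (u$i) * M$i$j * v$j)"
    by (simp add: cinner_def matrix_vector_mult_def sum_distrib_left mult.assoc)
  also have "\<dots> = (\<Sum>j\<in>UNIV. \<Sum>i\<in>UNIV. cnj (u$i) * M$i$j * v$j)"
    by (rule sum.swap)
  also have "\<dots> = cinner (M *v u) v"
  proof -
    have A: "cnj (M$j$i) = M$i$j" for i j
      using assms unfolding hermitian_mat_def by (metis complex_cnj_cnj)
    show ?thesis
      unfolding cinner_def matrix_vector_mult_def
      by (simp add: cnj_sum sum_distrib_right sum_distrib_left A mult.commute mult.left_commute)
  qed
  finally show ?thesis .
qed

lemma quad_zero: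
  fixes a b :: real
  assumes "\<And>e. 2*e*a + e^2*b \<le> 0"
  shows "a = 0"
proof (rule ccontr)
  assume "a \<noteq> 0"
  define e where "e = a / (\<bar>b\<bar> + 1)"
  have pos: "\<bar>b\<bar> + 1 > 0" by simp
  have "2*e*a + e^2*b \<le> 0" by (rule assms)
  then have "(2*e*a + e^2*b) * (\<bar>b\<bar>+1)^2 \<le> 0"
    by (simp add: mult_nonpos_nonneg)
  moreover have "(2*e*a + e^2*b) * (\<bar>b\<bar>+1)^2 = a^2 * (2*\<bar>b\<bar> + 2 + b)"
  proof -
    have ee: "e*(\<bar>b\<bar>+1) = a" unfolding e_def using pos by simp
    have "(2*e*a + e^2*b) * (\<bar>b\<bar>+1)^2 = 2*a*(e*(\<bar>b\<bar>+1))*(\<bar>b\<bar>+1) + (e*(\<bar>b\<bar>+1))^2*b"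
      by (simp add: algebra_simps power2_eq_square)
    also have "\<dots> = a^2 * (2*\<bar>b\<bar> + 2 + b)" unfolding ee by (simp add: algebra_simps power2_eq_square)
    finally show ?thesis .
  qed
  moreover have "a^2 * (2*\<bar>b\<bar> + 2 + b) > 0"
    using \<open>a \<noteq> 0\<close> by (intro mult_pos_pos) auto
  ultimately show False by linarith
qed

lemma poly_part:
  fixes d :: "'k::finite \<Rightarrow> real"
  assumes "\<And>t. (\<Prod>j\<in>UNIV. 1 + t * d j) = \<alpha> * t^2 + \<beta> * t + 1"
  defines "N \<equiv> {j. d j \<noteq> 0}"
  shows "card N \<le> 2" "card N = 2 \<Longrightarrow> \<alpha> = (\<Prod>j\<in>N. d j)" "card N < 2 \<Longrightarrow> \<alpha> = 0"
proof -
  define P where "P = (\<Prod>j\<in>N. [:1, d j:])"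
  have "poly P t = \<alpha> * t^2 + \<beta> * t + 1" for t
  proof -
    have "poly P t = (\<Prod>j\<in>N. 1 + t * d j)"
      unfolding P_def by (simp add: poly_prod mult.commute)
    also have "\<dots> = (\<Prod>j\<in>UNIV. 1 + t * d j)"
      by (rule prod.mono_neutral_left) (auto simp: N_def)
    finally show ?thesis using assms by simp
  qed
  then have "poly P = poly [:1, \<beta>, \<alpha>:]"
    by (auto simp: fun_eq_iff algebra_simps power2_eq_square)
  then have PE: "P = [:1, \<beta>, \<alpha>:]" by (simp add: poly_eq_poly_eq_iff)
  have dP: "degree P = card N"
    unfolding P_def by (subst degree_prod_eq_sum_degree) (auto simp: N_def)
  have lP: "lead_coeff P = (\<Prod>j\<in>N. d j)"
    unfolding P_def by (simp add: lead_coeff_prod N_def)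
  have "degree P \<le> 2" unfolding PE by simp
  then show "card N \<le> 2" using dP by simp
  show "card N = 2 \<Longrightarrow> \<alpha> = (\<Prod>j\<in>N. d j)"
    using lP dP PE by (simp add: numeral_2_eq_2)
  show "card N < 2 \<Longrightarrow> \<alpha> = 0"
  proof -
    assume "card N < 2"
    then have "coeff P 2 = 0" using dP by (intro coeff_eq_0) simp
    then show ?thesis unfolding PE by (simp add: numeral_2_eq_2)
  qed
qed



lemma mv_scaleR: "M *v (r *\<^sub>R v) = r *\<^sub>R (M *v (v::complex^'k))"
  by (simp add: vec_eq_iff matrix_vector_mult_def comp_scaleR scaleR_sum_right algebra_simps)

lemma cinner_cont: "continuous_on X (\<lambda>u. cinner (w::complex^'k) u)"
  unfolding cinner_def by (intro continuous_intros)

lemma quad_cont: "continuous_on X (\<lambda>u. Re (cinner u (M *v (u::complex^'k))))"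
  unfolding cinner_def matrix_vector_mult_def by (intro continuous_intros)

lemma eigen_step:
  fixes M :: "complex^'k^'k" and g :: "'k \<Rightarrow> complex^'k" and S :: "'k set"
  assumes H: "hermitian_mat M"
    and eig: "\<forall>i\<in>S. M *v g i = d i *\<^sub>R g i"
    and ex: "\<exists>u. u \<noteq> 0 \<and> (\<forall>i\<in>S. cinner (g i) u = 0)"
  shows "\<exists>u. (\<forall>i\<in>S. cinner (g i) u = 0) \<and> norm u = 1 \<and> (\<exists>l. M *v u = l *\<^sub>R u)"
proof -
  define W where "W = {u. \<forall>i\<in>S. cinner (g i) u = 0}"
  define Q where "Q = (\<lambda>u. Re (cinner u (M *v u)))"
  have Wlin: "u + r *\<^sub>R v \<in> W" if "u \<in> W" "v \<in> W" for u v r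
    using that by (simp add: W_def cinner_add_right cinner_scaleR_right)
  have Wsc: "r *\<^sub>R v \<in> W" if "v \<in> W" for v r
    using that by (simp add: W_def cinner_scaleR_right)
  have Wdiff: "u - v \<in> W" if "u \<in> W" "v \<in> W" for u v
    using that by (simp add: W_def cinner_diff_right)
  have WM: "M *v u \<in> W" if "u \<in> W" for u
  proof -
    { fix i assume i: "i \<in> S"
      have "cinner (g i) (M *v u) = cinner (M *v g i) u" by (rule herm_cinner[OF H])
      also have "\<dots> = 0" using i eig that by (simp add: W_def cinner_scaleR_left)
      finally have "cinner (g i) (M *v u) = 0" . }
    then show ?thesis by (simp add: W_def)
  qed
  have closedW: "closed W"
  proof -
    have "W = (\<Inter>i\<in>S. {u. cinner (g i) u = 0})" by (auto simp: W_def)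
    moreover have "closed {u. cinner (g i) u = 0}" for i
      by (rule closed_Collect_eq) (auto intro: cinner_cont continuous_intros)
    ultimately show ?thesis by auto
  qed
  define K where "K = W \<inter> sphere 0 1"
  have cK: "compact K" unfolding K_def by (simp add: closedW closed_Int_compact)
  obtain u0 where u0: "u0 \<noteq> 0" "u0 \<in> W" using ex by (auto simp: W_def)
  have "(1 / norm u0) *\<^sub>R u0 \<in> K"
    using u0 Wsc by (simp add: K_def)
  then have neK: "K \<noteq> {}" by auto
  have contQ: "continuous_on K Q" unfolding Q_def by (rule quad_cont)
  obtain u where uK: "u \<in> K" and umax: "\<forall>y\<in>K. Q y \<le> Q u"
    using continuous_attains_sup[OF cK neK contQ] by blast
  have uW: "u \<in> W" and un: "norm u = 1" using uK by (auto simp: K_def)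
  define l where "l = Q u"
  have Qscale: "Q (r *\<^sub>R v) = r^2 * Q v" for r v
    by (simp add: Q_def mv_scaleR cinner_scaleR_left cinner_scaleR_right power2_eq_square)
  have bound: "Q v \<le> l * (norm v)^2" if "v \<in> W" for v
  proof (cases "v = 0")
    case True then show ?thesis by (simp add: Q_def cinner_def)
  next
    case False
    then have nv: "norm v > 0" by simp
    have "(1 / norm v) *\<^sub>R v \<in> K" using that Wsc False by (simp add: K_def)
    then have "Q ((1 / norm v) *\<^sub>R v) \<le> l" using umax l_def by blast
    then have "(1/norm v)^2 * Q v \<le> l" by (simp add: Qscale)
    then show ?thesis using nv by (simp add: field_simps power2_eq_square)
  qed
  have Qexp: "Q (u + e *\<^sub>R w) = Q u + 2*e*Re (cinner w (M *v u)) + e^2 * Q w" for e w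
  proof -
    have "cinner u (M *v w) = cnj (cinner w (M *v u))"
      by (simp add: herm_cinner[OF H] cinner_cnj)
    then have r1: "Re (cinner u (M *v w)) = Re (cinner w (M *v u))" by simp
    show ?thesis
      unfolding Q_def
      by (simp add: matrix_vector_right_distrib mv_scaleR cinner_add_left cinner_add_right
          cinner_scaleR_left cinner_scaleR_right r1 algebra_simps power2_eq_square)
  qed
  have Nexp: "(norm (u + e *\<^sub>R w))^2 = 1 + 2*e*Re (cinner w u) + e^2 * (norm w)^2" for e w
  proof -
    have r1: "Re (cinner u w) = Re (cinner w u)" by (metis cinner_cnj cnj.sel(1))
    have "(norm (u + e *\<^sub>R w))^2 = Re (cinner (u + e *\<^sub>R w) (u + e *\<^sub>R w))"
      by (simp add: re_cinner_self)
    also have "\<dots> = Re (cinner u u) + 2*e*Re (cinner w u) + e^2 * Re (cinner w w)"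
      by (simp add: cinner_add_left cinner_add_right
          cinner_scaleR_left cinner_scaleR_right r1 algebra_simps power2_eq_square)
    finally show ?thesis by (simp add: re_cinner_self un)
  qed
  define v where "v = M *v u - l *\<^sub>R u"
  have vW: "v \<in> W" unfolding v_def using uW WM Wsc Wdiff by blast
  have "2*e*(Re (cinner v (M *v u)) - l * Re (cinner v u)) + e^2 * (Q v - l * (norm v)^2) \<le> 0" for e
  proof -
    have "Q (u + e *\<^sub>R v) \<le> l * (norm (u + e *\<^sub>R v))^2"
      using bound Wlin uW vW by blast
    then show ?thesis unfolding Qexp Nexp l_def by (simp add: algebra_simps)
  qed
  then have "Re (cinner v (M *v u)) - l * Re (cinner v u) = 0"
    by (intro quad_zero[where b = "Q v - l * (norm v)^2"]) (simp add: mult.assoc)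
  moreover have "cinner v v = cinner v (M *v u) - of_real l * cinner v u"
    unfolding v_def[symmetric, of ] by (simp add: v_def cinner_diff_right cinner_scaleR_right)
  ultimately have "Re (cinner v v) = 0" by simp
  then have "v = 0" by (simp add: re_cinner_self)
  then have "M *v u = l *\<^sub>R u" by (simp add: v_def)
  then show ?thesis using uW un by (auto simp: W_def)
qed



lemma spectral:
  fixes M :: "complex^'k^'k"
  assumes H: "hermitian_mat M"
  shows "\<exists>(f::'k \<Rightarrow> complex^'k) d. (\<forall>i j. cinner (f i) (f j) = (if i = j then 1 else 0)) \<and> (\<forall>i. M *v f i = d i *\<^sub>R f i)"
proof -
  have "\<exists>g d. (\<forall>i\<in>S. \<forall>j\<in>S. cinner (g i) (g j) = (if i = j then 1 else 0)) \<and> (\<forall>i\<in>S. M *v g i = d i *\<^sub>R g i)"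
    if "finite S" for S :: "'k set"
    using that
  proof (induction S rule: finite_induct)
    case empty then show ?case by auto
  next
    case (insert a S)
    then obtain g d where ON: "\<forall>i\<in>S. \<forall>j\<in>S. cinner (g i) (g j) = (if i = j then 1 else 0)"
      and EG: "\<forall>i\<in>S. M *v g i = d i *\<^sub>R g i" by blast
    define G :: "complex^'k^'k" where "G = (\<chi> b. if b \<in> S then (\<chi> l. cnj (g b $ l)) else 0)"
    have "row a G = 0" using insert.hyps(2) by (simp add: G_def row_def vec_eq_iff)
    then have "det G = 0" by (rule det_zero_row(2))
    then have "\<not> inj ((*v) G)"
      using det_nz_iff_inj_gen[of "(*v) G"] by simp
    then obtain x y where xy: "x \<noteq> y" "G *v x = G *v y" by (auto simp: inj_def)
    define u where "u = x - y"
    have u0: "u \<noteq> 0" using xy by (simp add: u_def)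
    have Gu: "G *v u = 0" using xy by (simp add: u_def matrix_vector_mult_diff_distrib)
    have uW: "\<forall>i\<in>S. cinner (g i) u = 0"
    proof
      fix i assume i: "i \<in> S"
      have "(G *v u) $ i = cinner (g i) u"
        using i by (simp add: G_def matrix_vector_mult_def cinner_def)
      then show "cinner (g i) u = 0" using Gu by simp
    qed
    obtain v l where vW: "\<forall>i\<in>S. cinner (g i) v = 0" and vn: "norm v = 1"
      and vE: "M *v v = l *\<^sub>R v"
      using eigen_step[OF H EG] u0 uW by blast
    define g' where "g' = g(a := v)"
    define d' where "d' = d(a := l)"
    have vv: "cinner v v = 1" by (simp add: cinner_self vn)
    have vg: "cinner v (g i) = 0" if "i \<in> S" for i
      using vW that by (metis cinner_cnj complex_cnj_zero)
    have "\<forall>i\<in>insert a S. \<forall>j\<in>insert a S. cinner (g' i) (g' j) = (if i = j then 1 else 0)"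
      using ON vW vg vv insert.hyps(2) by (auto simp: g'_def)
    moreover have "\<forall>i\<in>insert a S. M *v g' i = d' i *\<^sub>R g' i"
      using EG vE insert.hyps(2) by (auto simp: g'_def d'_def)
    ultimately show ?case by blast
  qed
  from this[OF finite_class.finite_UNIV] obtain g :: "'k \<Rightarrow> complex^'k" and d where
    "\<forall>i\<in>UNIV. \<forall>j\<in>UNIV. cinner (g i) (g j) = (if i = j then 1 else 0)"
    "\<forall>i\<in>UNIV. M *v g i = d i *\<^sub>R g i" by blast
  then show ?thesis by (intro exI[of _ g] exI[of _ d]) simp
qed

lemma complete:
  fixes f :: "'k \<Rightarrow> complex^'k"
  assumes ON: "\<forall>i j. cinner (f i) (f j) = (if i = j then 1 else 0)"
  shows "(\<Sum>j\<in>UNIV. f j $ p * cnj (f j $ l)) = (if p = l then 1 else 0)"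
proof -
  define U :: "complex^'k^'k" where "U = (\<chi> i j. f j $ i)"
  define V :: "complex^'k^'k" where "V = (\<chi> i j. cnj (f i $ j))"
  have "V ** U = mat 1"
    using ON by (simp add: vec_eq_iff matrix_matrix_mult_def U_def V_def mat_def cinner_def)
  then have "U ** V = mat 1" using matrix_left_right_inverse by blast
  then have "(U ** V) $ p $ l = (mat 1 :: complex^'k^'k) $ p $ l" by simp
  then show ?thesis by (simp add: matrix_matrix_mult_def U_def V_def mat_def)
qed

lemma spec_rep:
  fixes f :: "'k \<Rightarrow> complex^'k" and M :: "complex^'k^'k"
  assumes ON: "\<forall>i j. cinner (f i) (f j) = (if i = j then 1 else 0)"
    and EG: "\<forall>j. M *v f j = d j *\<^sub>R f j"
  shows "M $ i $ l = (\<Sum>j\<in>UNIV. of_real (d j) * f j $ i * cnj (f j $ l))"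
proof -
  have "(\<Sum>p\<in>UNIV. M $ i $ p * (if p = l then 1 else 0)) = (\<Sum>p\<in>UNIV. if p = l then M $ i $ p else 0)"
    by (rule sum.cong) auto
  then have "M $ i $ l = (\<Sum>p\<in>UNIV. M $ i $ p * (if p = l then 1 else 0))"
    by simp
  also have "\<dots> = (\<Sum>p\<in>UNIV. M $ i $ p * (\<Sum>j\<in>UNIV. f j $ p * cnj (f j $ l)))"
    by (simp add: complete[OF ON])
  also have "\<dots> = (\<Sum>p\<in>UNIV. \<Sum>j\<in>UNIV. M $ i $ p * f j $ p * cnj (f j $ l))"
    by (simp add: sum_distrib_left mult.assoc)
  also have "\<dots> = (\<Sum>j\<in>UNIV. \<Sum>p\<in>UNIV. M $ i $ p * f j $ p * cnj (f j $ l))"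
    by (rule sum.swap)
  also have "\<dots> = (\<Sum>j\<in>UNIV. (M *v f j) $ i * cnj (f j $ l))"
    by (simp add: matrix_vector_mult_def sum_distrib_right)
  also have "\<dots> = (\<Sum>j\<in>UNIV. of_real (d j) * f j $ i * cnj (f j $ l))"
    by (simp add: EG comp_scaleR scaleR_conv_of_real[where 'a=complex] mult.assoc)
  finally show ?thesis .
qed



lemma mat_scaleR: "(t *\<^sub>R M) $ i $ l = complex_of_real t * (M :: complex^'k^'k) $ i $ l"
  by (metis vector_scaleR_component scaleR_conv_of_real)

lemma mult_cnj_sq: "z * cnj z = (complex_of_real (cmod z))^2"
  by (metis complex_norm_square of_real_power)

lemma det_rep:
  fixes f :: "'k \<Rightarrow> complex^'k" and M :: "complex^'k^'k"
  assumes ON: "\<forall>i j. cinner (f i) (f j) = (if i = j then 1 else 0)"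
    and EG: "\<forall>j. M *v f j = d j *\<^sub>R f j"
  shows "det (mat 1 + t *\<^sub>R M) = of_real (\<Prod>j\<in>UNIV. 1 + t * d j)"
proof -
  define U :: "complex^'k^'k" where "U = (\<chi> i j. f j $ i)"
  define V :: "complex^'k^'k" where "V = (\<chi> i j. cnj (f i $ j))"
  define D :: "complex^'k^'k" where "D = (\<chi> i j. if i = j then of_real (1 + t * d i) else 0)"
  have VU: "V ** U = mat 1"
    using ON by (simp add: vec_eq_iff matrix_matrix_mult_def U_def V_def mat_def cinner_def)
  have UD: "(U ** D) $ i $ p = f p $ i * of_real (1 + t * d p)" for i p
  proof -
    have "(U ** D) $ i $ p = (\<Sum>k\<in>UNIV. f k $ i * (if k = p then complex_of_real (1 + t * d k) else 0))"
      unfolding matrix_matrix_mult_def U_def D_def by simp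
    also have "\<dots> = (\<Sum>k\<in>UNIV. if k = p then f k $ i * complex_of_real (1 + t * d k) else 0)"
      by (rule sum.cong) auto
    finally show ?thesis by simp
  qed
  have E: "mat 1 + t *\<^sub>R M = (U ** D) ** V"
  proof -
    have "((U ** D) ** V) $ i $ l = (mat 1 + t *\<^sub>R M) $ i $ l" for i l
    proof -
      have "((U ** D) ** V) $ i $ l = (\<Sum>p\<in>UNIV. (U ** D) $ i $ p * V $ p $ l)"
        by (simp add: matrix_matrix_mult_def)
      also have "\<dots> = (\<Sum>p\<in>UNIV. f p $ i * of_real (1 + t*d p) * cnj (f p $ l))"
        by (simp only: UD V_def vec_lambda_beta)
      also have "\<dots> = (\<Sum>p\<in>UNIV. f p $ i * cnj (f p $ l)) + of_real t * (\<Sum>p\<in>UNIV. of_real (d p) * f p $ i * cnj (f p $ l))"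
        by (simp add: algebra_simps sum.distrib sum_distrib_left)
      also have "\<dots> = (if i = l then 1 else 0) + of_real t * M $ i $ l"
        by (simp add: complete[OF ON] spec_rep[OF ON EG])
      also have "\<dots> = (mat 1 + t *\<^sub>R M) $ i $ l" by (simp add: mat_def scaleR_conv_of_real[where 'a=complex])
      finally show ?thesis .
    qed
    then show ?thesis by (simp add: vec_eq_iff)
  qed
  have "det (mat 1 + t *\<^sub>R M) = det U * det D * det V" by (simp add: E det_mul)
  also have "\<dots> = det D * det (V ** U)" by (simp add: det_mul)
  also have "\<dots> = det D" by (simp add: VU)
  also have "det D = (\<Prod>i\<in>UNIV. D $ i $ i)" by (rule det_diagonal) (simp add: D_def)
  also have "\<dots> = of_real (\<Prod>j\<in>UNIV. 1 + t * d j)" by (simp add: D_def)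
  finally show ?thesis .
qed

lemma psd_d_nonneg:
  fixes f :: "'k \<Rightarrow> complex^'k" and M :: "complex^'k^'k"
  assumes ON: "\<forall>i j. cinner (f i) (f j) = (if i = j then 1 else 0)"
    and EG: "\<forall>j. M *v f j = d j *\<^sub>R f j"
    and P: "psd_herm M"
  shows "d j \<ge> 0"
proof -
  have "0 \<le> Re (cinner (f j) (M *v f j))" using P by (simp add: psd_herm_def cinner_def)
  also have "cinner (f j) (M *v f j) = of_real (d j)" using EG ON by (simp add: cinner_scaleR_right)
  finally show ?thesis by simp
qed

lemma nonneg_psd:
  fixes f :: "'k \<Rightarrow> complex^'k" and M :: "complex^'k^'k"
  assumes ON: "\<forall>i j. cinner (f i) (f j) = (if i = j then 1 else 0)"
    and EG: "\<forall>j. M *v f j = d j *\<^sub>R f j"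
    and H: "hermitian_mat M"
    and nn: "\<forall>j. d j \<ge> 0"
  shows "psd_herm M"
  unfolding psd_herm_def
proof (intro conjI H allI)
  fix v :: "complex^'k"
  define c where "c j = cinner (f j) v" for j
  have Mv: "(M *v v) $ i = (\<Sum>j\<in>UNIV. of_real (d j) * f j $ i * c j)" for i
  proof -
    have "(M *v v) $ i = (\<Sum>l\<in>UNIV. \<Sum>j\<in>UNIV. of_real (d j) * f j $ i * cnj (f j $ l) * v $ l)"
      by (simp add: matrix_vector_mult_def spec_rep[OF ON EG] sum_distrib_right)
    also have "\<dots> = (\<Sum>j\<in>UNIV. \<Sum>l\<in>UNIV. of_real (d j) * f j $ i * cnj (f j $ l) * v $ l)"
      by (rule sum.swap)
    also have "\<dots> = (\<Sum>j\<in>UNIV. of_real (d j) * f j $ i * c j)"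
      by (simp add: c_def cinner_def sum_distrib_left mult.assoc)
    finally show ?thesis .
  qed
  have "(\<Sum>i\<in>UNIV. cnj (v $ i) * (M *v v) $ i) = (\<Sum>i\<in>UNIV. \<Sum>j\<in>UNIV. cnj (v $ i) * (of_real (d j) * f j $ i * c j))"
    by (simp add: Mv sum_distrib_left)
  also have "\<dots> = (\<Sum>j\<in>UNIV. \<Sum>i\<in>UNIV. cnj (v $ i) * (of_real (d j) * f j $ i * c j))"
    by (rule sum.swap)
  also have "\<dots> = (\<Sum>j\<in>UNIV. of_real (d j) * c j * cinner v (f j))"
    by (simp add: cinner_def sum_distrib_left algebra_simps)
  also have "\<dots> = (\<Sum>j\<in>UNIV. of_real (d j * (norm (c j))^2))"
  proof (rule sum.cong)
    fix j
    have "cinner v (f j) = cnj (c j)" by (simp add: c_def cinner_cnj)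
    then show "of_real (d j) * c j * cinner v (f j) = of_real (d j * (norm (c j))^2)"
      by (simp add: mult_cnj_sq mult.assoc)
  qed simp
  finally have "Re (\<Sum>i\<in>UNIV. cnj (v $ i) * (M *v v) $ i) = (\<Sum>j\<in>UNIV. d j * (norm (c j))^2)"
    by (simp add: Re_sum)
  also have "\<dots> \<ge> 0" using nn by (intro sum_nonneg) simp
  finally show "0 \<le> Re (\<Sum>i\<in>UNIV. cnj (v $ i) * (M *v v) $ i)" .
qed



lemma rank_rep:
  fixes f :: "'k \<Rightarrow> complex^'k" and M :: "complex^'k^'k"
  assumes ON: "\<forall>i j. cinner (f i) (f j) = (if i = j then 1 else 0)"
    and EG: "\<forall>j. M *v f j = d j *\<^sub>R f j"
  shows "rank M = card {j. d j \<noteq> 0}"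
proof -
  define N where "N = {j. d j \<noteq> 0}"
  define b :: "'k \<Rightarrow> complex^'k" where "b j = (\<chi> l. cnj (f j $ l))" for j
  define B where "B = b ` N"
  have injb: "inj_on b N"
  proof (rule inj_onI)
    fix i j assume "b i = b j"
    then have "f i = f j" by (simp add: b_def vec_eq_iff)
    then have "cinner (f i) (f j) = 1" using ON by simp
    then show "i = j" using ON by (metis zero_neq_one)
  qed
  have orth: "(\<Sum>p\<in>UNIV. f l $ p * b j $ p) = (if j = l then 1 else 0)" for j l
    using ON[rule_format, of j l] by (simp add: b_def cinner_def mult.commute)
  have rowsub: "rows M \<subseteq> vec.span B"
  proof
    fix r assume "r \<in> rows M"
    then obtain i where r: "r = row i M" by (auto simp: rows_def)
    have "r = (\<Sum>j\<in>N. (of_real (d j) * f j $ i) *s b j)"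
    proof -
      have "r $ l = (\<Sum>j\<in>N. (of_real (d j) * f j $ i) * b j $ l)" for l
      proof -
        have "r $ l = (\<Sum>j\<in>UNIV. of_real (d j) * f j $ i * cnj (f j $ l))"
          by (simp add: r row_def spec_rep[OF ON EG])
        also have "\<dots> = (\<Sum>j\<in>N. of_real (d j) * f j $ i * cnj (f j $ l))"
          by (rule sum.mono_neutral_right) (auto simp: N_def)
        finally show ?thesis by (simp add: b_def)
      qed
      then show ?thesis by (simp add: vec_eq_iff)
    qed
    also have "\<dots> \<in> vec.span B"
      by (intro vec.span_sum vec.span_scale vec.span_base) (auto simp: B_def)
    finally show "r \<in> vec.span B" .
  qed
  have Bsub: "B \<subseteq> vec.span (rows M)"
  proof
    fix r assume "r \<in> B"
    then obtain j where j: "j \<in> N" and r: "r = b j" by (auto simp: B_def)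
    have dj: "d j \<noteq> 0" using j by (simp add: N_def)
    have "r = (\<Sum>i\<in>UNIV. (cnj (f j $ i) / of_real (d j)) *s row i M)"
    proof -
      have "(\<Sum>i\<in>UNIV. (cnj (f j $ i) / of_real (d j)) * M $ i $ l) = cnj (f j $ l)" for l
      proof -
        have "(\<Sum>i\<in>UNIV. (cnj (f j $ i) / of_real (d j)) * M $ i $ l)
            = (\<Sum>i\<in>UNIV. \<Sum>p\<in>UNIV. (cnj (f j $ i) / of_real (d j)) * (of_real (d p) * f p $ i * cnj (f p $ l)))"
          by (simp add: spec_rep[OF ON EG] sum_distrib_left)
        also have "\<dots> = (\<Sum>p\<in>UNIV. \<Sum>i\<in>UNIV. (cnj (f j $ i) / of_real (d j)) * (of_real (d p) * f p $ i * cnj (f p $ l)))"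
          by (rule sum.swap)
        also have "\<dots> = (\<Sum>p\<in>UNIV. (of_real (d p) / of_real (d j) * cnj (f p $ l)) * cinner (f j) (f p))"
          by (simp add: cinner_def sum_distrib_left sum_distrib_right sum_divide_distrib algebra_simps)
        also have "\<dots> = (\<Sum>p\<in>UNIV. if p = j then cnj (f j $ l) else 0)"
          using ON dj by (intro sum.cong) auto
        also have "\<dots> = cnj (f j $ l)" by simp
        finally show ?thesis .
      qed
      then show ?thesis by (simp add: vec_eq_iff r b_def row_def)
    qed
    also have "\<dots> \<in> vec.span (rows M)"
      by (intro vec.span_sum vec.span_scale vec.span_base) (auto simp: rows_def)
    finally show "r \<in> vec.span (rows M)" .
  qed
  have indep: "vec.independent B"
    unfolding vec.independent_explicit
  proof (intro conjI allI impI ballI)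
    show "finite B" by (simp add: B_def)
    fix c v assume S: "(\<Sum>v\<in>B. c v *s v) = 0" and v: "v \<in> B"
    then obtain l where l: "l \<in> N" and vl: "v = b l" by (auto simp: B_def)
    have S': "(\<Sum>j\<in>N. c (b j) *s b j) = 0"
      using S by (simp add: B_def sum.reindex[OF injb])
    have "0 = (\<Sum>p\<in>UNIV. f l $ p * (\<Sum>j\<in>N. c (b j) *s b j) $ p)"
      by (simp add: S')
    also have "\<dots> = (\<Sum>p\<in>UNIV. \<Sum>j\<in>N. c (b j) * (f l $ p * b j $ p))"
      by (simp add: sum_distrib_left algebra_simps)
    also have "\<dots> = (\<Sum>j\<in>N. \<Sum>p\<in>UNIV. c (b j) * (f l $ p * b j $ p))"
      by (rule sum.swap)
    also have "\<dots> = (\<Sum>j\<in>N. c (b j) * (if j = l then 1 else 0))"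
      by (simp add: sum_distrib_left[symmetric] orth)
    also have "\<dots> = c (b l)" using l by (simp add: if_distrib cong: if_cong)
    finally show "c v = 0" by (simp add: vl)
  qed
  have "rank M = vec.dim (rows M)" by (simp add: row_rank_def_gen)
  also have "\<dots> = vec.dim (vec.span (rows M))" by simp
  also have "vec.span (rows M) = vec.span B" using rowsub Bsub by (simp add: vec.span_eq)
  also have "vec.dim (vec.span B) = vec.dim B" by simp
  also have "\<dots> = card B" by (rule vec.dim_eq_card_independent[OF indep])
  also have "\<dots> = card N" unfolding B_def by (rule card_image[OF injb])
  finally show ?thesis by (simp add: N_def)
qed



lemma pencil_herm:
  assumes "\<forall>j. hermitian_mat (As j)"
  shows "hermitian_mat (pencil As x)"
proof -
  have A: "cnj (As l $ j $ i) = As l $ i $ j" for l i j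
    using assms unfolding hermitian_mat_def by (metis complex_cnj_cnj)
  show ?thesis by (simp add: hermitian_mat_def pencil_def cnj_sum A)
qed

lemma pencil_scale: "pencil As (t *\<^sub>R x) = t *\<^sub>R pencil As x"
  by (simp add: vec_eq_iff pencil_def scaleR_sum_right scaleR_conv_of_real[where 'a=complex] sum_distrib_left mult.assoc)

lemma pencil_neg: "pencil As (- x) = - pencil As x"
  by (simp add: vec_eq_iff pencil_def sum_negf)

lemma mv_neg: "(- M) *v u = - (M *v (u::complex^'k))"
  by (simp add: vec_eq_iff matrix_vector_mult_def sum_negf)

lemma real_mv_scale: "(A::real^'n^'n) *v (t *\<^sub>R x) = t *\<^sub>R (A *v x)"
  by (simp add: vec_eq_iff matrix_vector_mult_def sum_distrib_left algebra_simps)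

lemma line_poly:
  fixes A :: "real^'n^'n" and b :: "real^'n" and As :: "'n \<Rightarrow> complex^'k^'k"
    and f :: "'k \<Rightarrow> complex^'k" and d :: "'k \<Rightarrow> real"
  assumes D: "\<forall>x. complex_of_real (x \<bullet> (A *v x) + b \<bullet> x + 1) = det (mat 1 + pencil As x)"
    and ON: "\<forall>i j. cinner (f i) (f j) = (if i = j then 1 else 0)"
    and EG: "\<forall>j. pencil As x *v f j = d j *\<^sub>R f j"
  shows "(\<Prod>j\<in>UNIV. 1 + t * d j) = (x \<bullet> (A *v x)) * t^2 + (b \<bullet> x) * t + 1"
proof -
  have "complex_of_real (\<Prod>j\<in>UNIV. 1 + t * d j) = det (mat 1 + t *\<^sub>R pencil As x)"
    by (rule det_rep[OF ON EG, symmetric])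
  also have "\<dots> = det (mat 1 + pencil As (t *\<^sub>R x))" by (simp add: pencil_scale)
  also have "\<dots> = complex_of_real ((t *\<^sub>R x) \<bullet> (A *v (t *\<^sub>R x)) + b \<bullet> (t *\<^sub>R x) + 1)"
    by (rule D[rule_format, symmetric])
  also have "(t *\<^sub>R x) \<bullet> (A *v (t *\<^sub>R x)) + b \<bullet> (t *\<^sub>R x) + 1 = (x \<bullet> (A *v x)) * t^2 + (b \<bullet> x) * t + 1"
    by (simp add: real_mv_scale power2_eq_square algebra_simps)
  finally show ?thesis by (simp only: of_real_eq_iff)
qed

theorem mainTheorem7:
  fixes A :: "real^'n^'n" and b :: "real^'n" and As :: "'n \<Rightarrow> complex^'k^'k"
  assumes "transpose A = A"
    and "A \<noteq> 0"
    and "\<forall>j. hermitian_mat (As j)"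
    and "\<forall>x. complex_of_real (x \<bullet> (A *v x) + b \<bullet> x + 1) = det (mat 1 + pencil As x)"
  shows "\<not> contains_full_dim_cone As 2 \<longleftrightarrow> neg_semidef A"
proof
  assume nc: "\<not> contains_full_dim_cone As 2"
  show "neg_semidef A" unfolding neg_semidef_def
  proof (rule allI, rule ccontr)
    fix v :: "real^'n"
    assume "\<not> v \<bullet> (A *v v) \<le> 0"
    then have apos: "v \<bullet> (A *v v) > 0" by simp
    define M where "M = pencil As v"
    have H: "hermitian_mat M" unfolding M_def by (rule pencil_herm[OF assms(3)])
    obtain f :: "'k \<Rightarrow> complex^'k" and d where ON: "\<forall>i j. cinner (f i) (f j) = (if i = j then 1 else 0)"
      and EG: "\<forall>j. M *v f j = d j *\<^sub>R f j" using spectral[OF H] by blast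
    note LP = line_poly[OF assms(4) ON EG[unfolded M_def]]
    define N where "N = {j. d j \<noteq> 0}"
    have "card N = 2"
    proof (rule ccontr)
      assume "card N \<noteq> 2"
      then have "card N < 2" using poly_part(1)[OF LP] by (simp add: N_def)
      then have "v \<bullet> (A *v v) = 0" using poly_part(3)[OF LP] by (simp add: N_def)
      then show False using apos by simp
    qed
    then have al: "v \<bullet> (A *v v) = (\<Prod>j\<in>N. d j)" using poly_part(2)[OF LP] by (simp add: N_def)
    from \<open>card N = 2\<close> obtain p q where pq: "N = {p, q}" "p \<noteq> q" by (auto simp: card_2_iff)
    have prod: "d p * d q > 0" using al apos pq by simp
    have rk: "rank M = 2" using rank_rep[OF ON EG] \<open>card N = 2\<close> by (simp add: N_def)
    have out: "d j = 0" if "j \<noteq> p" "j \<noteq> q" for j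
      using that pq by (auto simp: N_def)
    show False
    proof (cases "d p > 0")
      case True
      then have "d q > 0" using prod by (simp add: zero_less_mult_iff)
      then have "\<forall>j. d j \<ge> 0" using True out by (metis order.strict_implies_order order_refl)
      then have "psd_herm M" by (rule nonneg_psd[OF ON EG H])
      then have "contains_full_dim_cone As 2"
        unfolding contains_full_dim_cone_def using rk M_def by blast
      then show False using nc by simp
    next
      case False
      then have dp: "d p < 0" using prod by (cases "d p = 0") auto
      then have "d q < 0" using prod by (simp add: zero_less_mult_iff)
      then have nn: "\<forall>j. - d j \<ge> 0" using dp out by (metis neg_0_le_iff_le order.strict_implies_order order_refl)
      define M' where "M' = pencil As (- v)"
      have M': "M' = - M" by (simp add: M'_def M_def pencil_neg)
      have H': "hermitian_mat M'" unfolding M'_def by (rule pencil_herm[OF assms(3)])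
      have EG': "\<forall>j. M' *v f j = (- d j) *\<^sub>R f j" using EG by (simp add: M' mv_neg)
      have "psd_herm M'" by (rule nonneg_psd[OF ON EG' H' nn])
      moreover have "rank M' = 2" using rank_rep[OF ON EG'] \<open>card N = 2\<close> by (simp add: N_def)
      ultimately have "contains_full_dim_cone As 2"
        unfolding contains_full_dim_cone_def using M'_def by blast
      then show False using nc by simp
    qed
  qed
next
  assume ns: "neg_semidef A"
  show "\<not> contains_full_dim_cone As 2"
  proof
    assume "contains_full_dim_cone As 2"
    then obtain x where P: "psd_herm (pencil As x)" and rk: "rank (pencil As x) = 2"
      by (auto simp: contains_full_dim_cone_def)
    define M where "M = pencil As x"
    have H: "hermitian_mat M" unfolding M_def by (rule pencil_herm[OF assms(3)])
    obtain f :: "'k \<Rightarrow> complex^'k" and d where ON: "\<forall>i j. cinner (f i) (f j) = (if i = j then 1 else 0)"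
      and EG: "\<forall>j. M *v f j = d j *\<^sub>R f j" using spectral[OF H] by blast
    note LP = line_poly[OF assms(4) ON EG[unfolded M_def]]
    define N where "N = {j. d j \<noteq> 0}"
    have nn: "d j \<ge> 0" for j using psd_d_nonneg[OF ON EG] P by (simp add: M_def)
    have "card N = 2" using rank_rep[OF ON EG] rk by (simp add: N_def M_def)
    then have al: "x \<bullet> (A *v x) = (\<Prod>j\<in>N. d j)" using poly_part(2)[OF LP] by (simp add: N_def)
    have "(\<Prod>j\<in>N. d j) > 0"
    proof (rule prod_pos)
      fix j assume "j \<in> N" then show "d j > 0" using nn[of j] by (simp add: N_def)
    qed
    moreover have "x \<bullet> (A *v x) \<le> 0" using ns by (simp add: neg_semidef_def)
    ultimately show False using al by simp
  qed
qed


end
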